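(* For $x=(x_1,x_2),y=(y_1,y_2)\in\mathbb R^2$ define $$d_1(x,y)=|x_1-y_1|+\tan^{-1}(|x_2-y_2|),\qquad d_2(x,y)=|x_2-y_2|+\tan^{-1}(|x_1-y_1|).$$ Then $(\mathbb R^2,d_1)$ and $(\mathbb R^2,d_2)$ are Gromov hyperbolic with $\delta=\pi/2$, but $(\mathbb R^2,d)$ with $d=d_1+d_2$ is not Gromov hyperbolic (for any $\delta\ge0$).
   Context: A metric space $(Y,\rho)$ is Gromov hyperbolic with constant $\delta\ge 0$ if $\rho(x,y)+\rho(z,v)\leq \max\{\rho(x,z)+\rho(y,v),\ \rho(x,v)+\rho(y,z)\}+2\delta$ for all $x,y,z,v\in Y$; it is Gromov hyperbolic if this holds for some $\delta\ge0$. Here $d_1,d_2$ are metrics on $\mathbb R^2$. *)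

theory Defs
  imports "HOL-Analysis.Analysis"
begin

definition gromov_hyperbolic_with :: "('a \<Rightarrow> 'a \<Rightarrow> real) \<Rightarrow> real \<Rightarrow> bool" where
  "gromov_hyperbolic_with \<rho> \<delta> \<longleftrightarrow> \<delta> \<ge> 0 \<and>
     (\<forall>x y z v. \<rho> x y + \<rho> z v \<le> max (\<rho> x z + \<rho> y v) (\<rho> x v + \<rho> y z) + 2 * \<delta>)"

definition gromov_hyperbolic :: "('a \<Rightarrow> 'a \<Rightarrow> real) \<Rightarrow> bool" where
  "gromov_hyperbolic \<rho> \<longleftrightarrow> (\<exists>\<delta>\<ge>0. gromov_hyperbolic_with \<rho> \<delta>)"

definition d1 :: "real \<times> real \<Rightarrow> real \<times> real \<Rightarrow> real" where
  "d1 x y = \<bar>fst x - fst y\<bar> + arctan \<bar>snd x - snd y\<bar>"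

definition d2 :: "real \<times> real \<Rightarrow> real \<times> real \<Rightarrow> real" where
  "d2 x y = \<bar>snd x - snd y\<bar> + arctan \<bar>fst x - fst y\<bar>"

end

theory Submission
  imports Defs
begin

lemma four_point_real: "\<bar>(a::real) - b\<bar> + \<bar>c - e\<bar> \<le> max (\<bar>a - c\<bar> + \<bar>b - e\<bar>) (\<bar>a - e\<bar> + \<bar>b - c\<bar>)"
  by (simp add: abs_if max_def split: if_splits) linarith?

lemma gen_hyp:
  fixes f :: "real \<times> real \<Rightarrow> real" and g :: "real \<times> real \<Rightarrow> real"
  assumes "\<rho> = (\<lambda>x y. \<bar>f x - f y\<bar> + arctan \<bar>g x - g y\<bar>)"
  shows "gromov_hyperbolic_with \<rho> (pi / 2)"
  unfolding gromov_hyperbolic_with_def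
proof (intro conjI allI)
  show "0 \<le> pi / 2" by simp
  fix x y z v
  have h: "0 \<le> arctan \<bar>t\<bar> \<and> arctan \<bar>t\<bar> < pi / 2" for t
    using arctan_ubound[of "\<bar>t\<bar>"] by simp
  have fp: "\<bar>f x - f y\<bar> + \<bar>f z - f v\<bar> \<le> max (\<bar>f x - f z\<bar> + \<bar>f y - f v\<bar>) (\<bar>f x - f v\<bar> + \<bar>f y - f z\<bar>)"
    by (rule four_point_real)
  let ?A = "\<bar>f x - f z\<bar> + \<bar>f y - f v\<bar>" and ?B = "\<bar>f x - f v\<bar> + \<bar>f y - f z\<bar>"
  have r: "\<rho> x y + \<rho> z v \<le> ?A + pi \<or> \<rho> x y + \<rho> z v \<le> ?B + pi"
    using fp h[of "g x - g y"] h[of "g z - g v"] unfolding assms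
    by (cases "?A \<le> ?B") (simp_all add: max_def)
  have "?A \<le> \<rho> x z + \<rho> y v" "?B \<le> \<rho> x v + \<rho> y z"
    using h[of "g x - g z"] h[of "g y - g v"] h[of "g x - g v"] h[of "g y - g z"]
    unfolding assms by simp_all
  then show "\<rho> x y + \<rho> z v \<le> max (\<rho> x z + \<rho> y v) (\<rho> x v + \<rho> y z) + 2 * (pi / 2)"
    using r by (auto simp: max_def)
qed

theorem lemma4p4:
  shows "gromov_hyperbolic_with d1 (pi / 2) \<and> gromov_hyperbolic_with d2 (pi / 2) \<and>
         \<not> gromov_hyperbolic (\<lambda>x y. d1 x y + d2 x y)"
proof (intro conjI)
  show "gromov_hyperbolic_with d1 (pi / 2)"
    by (rule gen_hyp[where f=fst and g=snd]) (simp add: d1_def fun_eq_iff)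
  show "gromov_hyperbolic_with d2 (pi / 2)"
    by (rule gen_hyp[where f=snd and g=fst]) (simp add: d2_def fun_eq_iff)
  show "\<not> gromov_hyperbolic (\<lambda>x y. d1 x y + d2 x y)"
  proof
    assume "gromov_hyperbolic (\<lambda>x y. d1 x y + d2 x y)"
    then obtain \<delta> where d0: "\<delta> \<ge> 0" and H: "gromov_hyperbolic_with (\<lambda>x y. d1 x y + d2 x y) \<delta>"
      unfolding gromov_hyperbolic_def by blast
    define t where "t = \<delta> + 1"
    have tp: "t > 0" using d0 t_def by simp
    have at: "arctan t \<ge> 0" using tp by simp
    from H have "d1 (0,0) (t,t) + d2 (0,0) (t,t) + (d1 (t,0) (0,t) + d2 (t,0) (0,t))
       \<le> max (d1 (0,0) (t,0) + d2 (0,0) (t,0) + (d1 (t,t) (0,t) + d2 (t,t) (0,t)))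
              (d1 (0,0) (0,t) + d2 (0,0) (0,t) + (d1 (t,t) (t,0) + d2 (t,t) (t,0))) + 2 * \<delta>"
      unfolding gromov_hyperbolic_with_def by blast
    moreover have "arctan (1+\<delta>) \<ge> 0" using d0 by simp
    ultimately show False using tp at d0 unfolding d1_def d2_def by (simp add: t_def)
  qed
qed

end
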